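(* Let $\ell\in\mathbb{N}$ and let $G$ be a finite $\ell$-tuple regular group that can be generated by $\ell$ elements. Then $G$ is $1$-ultrahomogeneous, i.e. any two elements of $G$ of the same order are mapped to each other by some automorphism of $G$.
   Context: For $\ell\in\mathbb{N}$, a finite group $G$ is $\ell$-tuple regular if for all tuples $(g_1,\ldots,g_\ell),(h_1,\ldots,h_\ell)\in G^\ell$ (entries may repeat) for which $g_i\mapsto h_i$ defines an isomorphism $\langle g_1,\ldots,g_\ell\rangle\to\langle h_1,\ldots,h_\ell\rangle$, there exists a bijection $\Psi\colon G\to G$ such that for every $g\in G$ the assignment $g_1\mapsto h_1,\ldots,g_\ell\mapsto h_\ell,g\mapsto\Psi(g)$ defines an isomorphism $\langle g_1,\ldots,g_\ell,g\rangle\to\langle h_1,\ldots,h_\ell,\Psi(g)\rangle$. *)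

theory Defs
  imports "HOL-Algebra.Algebra"
begin

text \<open>Tuples of length l are modelled as functions nat => 'a, of which only the
entries at indices i < l matter.\<close>

definition tuple_iso :: "('a, 'b) monoid_scheme \<Rightarrow> nat \<Rightarrow> (nat \<Rightarrow> 'a) \<Rightarrow> (nat \<Rightarrow> 'a) \<Rightarrow> bool" where
  "tuple_iso G l g h \<longleftrightarrow>
     (\<exists>\<phi>. \<phi> \<in> iso (G\<lparr>carrier := generate G (g ` {..<l})\<rparr>)
                   (G\<lparr>carrier := generate G (h ` {..<l})\<rparr>)
          \<and> (\<forall>i<l. \<phi> (g i) = h i))"

definition tuple_regular :: "('a, 'b) monoid_scheme \<Rightarrow> nat \<Rightarrow> bool" where
  "tuple_regular G l \<longleftrightarrow>
     (\<forall>g h. (\<forall>i<l. g i \<in> carrier G) \<longrightarrow> (\<forall>i<l. h i \<in> carrier G) \<longrightarrow>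
        tuple_iso G l g h \<longrightarrow>
        (\<exists>\<Psi>. bij_betw \<Psi> (carrier G) (carrier G) \<and>
             (\<forall>x\<in>carrier G. tuple_iso G (Suc l) (g(l := x)) (h(l := \<Psi> x)))))"

end

theory Submission
  imports Defs
begin

lemma cyc_iso:
  fixes G (structure)
  assumes "group G" "x \<in> carrier G" "y \<in> carrier G" "group.ord G x = group.ord G y"
  shows "\<exists>\<phi>. \<phi> \<in> iso (G\<lparr>carrier := generate G {x}\<rparr>) (G\<lparr>carrier := generate G {y}\<rparr>) \<and> \<phi> x = y"
proof -
  interpret group G by fact
  define k where "k z = (SOME k::int. z = x [^] k)" for z
  define \<phi> where "\<phi> z = y [^] k z" for z
  have kx: "x [^] k (x [^] i) = x [^] i" for i :: int
  proof -
    have "\<exists>j::int. x [^] i = x [^] j" by blast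
    then have "x [^] i = x [^] k (x [^] i)" unfolding k_def by (rule someI_ex)
    then show ?thesis by simp
  qed
  have key: "\<phi> (x [^] i) = y [^] i" for i :: int
  proof -
    have "int (ord x) dvd (i - k (x [^] i))"
      using kx[of i] int_pow_eq[OF assms(2), of "k (x [^] i)" i] by simp
    then show ?thesis unfolding \<phi>_def using int_pow_eq[OF assms(3)] assms(4) by simp
  qed
  have gx: "generate G {x} = {x [^] (i::int) | i. i \<in> UNIV}" by (rule generate_pow[OF assms(2)])
  have gy: "generate G {y} = {y [^] (i::int) | i. i \<in> UNIV}" by (rule generate_pow[OF assms(3)])
  have hom: "\<phi> \<in> hom (G\<lparr>carrier := generate G {x}\<rparr>) (G\<lparr>carrier := generate G {y}\<rparr>)"
  proof (rule homI)
    fix a assume "a \<in> carrier (G\<lparr>carrier := generate G {x}\<rparr>)"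
    then obtain i where "a = x [^] (i::int)" using gx by auto
    then show "\<phi> a \<in> carrier (G\<lparr>carrier := generate G {y}\<rparr>)" using key gy by auto
  next
    fix a b assume "a \<in> carrier (G\<lparr>carrier := generate G {x}\<rparr>)" "b \<in> carrier (G\<lparr>carrier := generate G {x}\<rparr>)"
    then obtain i j where "a = x [^] (i::int)" "b = x [^] (j::int)" using gx by auto
    then show "\<phi> (a \<otimes>\<^bsub>G\<lparr>carrier := generate G {x}\<rparr>\<^esub> b) = \<phi> a \<otimes>\<^bsub>G\<lparr>carrier := generate G {y}\<rparr>\<^esub> \<phi> b"
      using key int_pow_mult assms(2,3) by (simp flip: int_pow_mult)
  qed
  have inj: "inj_on \<phi> (generate G {x})"
  proof (rule inj_onI)
    fix a b assume "a \<in> generate G {x}" "b \<in> generate G {x}" "\<phi> a = \<phi> b"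
    then obtain i j where ij: "a = x [^] (i::int)" "b = x [^] (j::int)" "\<phi> a = \<phi> b" using gx by auto
    then have "y [^] i = y [^] j" using key by simp
    then have "int (ord y) dvd (j - i)" using int_pow_eq[OF assms(3)] by simp
    then show "a = b" using ij int_pow_eq[OF assms(2)] assms(4) by simp
  qed
  have surj: "\<phi> ` generate G {x} = generate G {y}"
  proof
    show "\<phi> ` generate G {x} \<subseteq> generate G {y}" using hom hom_in_carrier by fastforce
    show "generate G {y} \<subseteq> \<phi> ` generate G {x}"
    proof
      fix b assume "b \<in> generate G {y}"
      then obtain i where "b = y [^] (i::int)" using gy by auto
      then have "b = \<phi> (x [^] i)" using key by simp
      then show "b \<in> \<phi> ` generate G {x}" using gx by auto
    qed
  qed
  have "\<phi> x = y" using key[of 1] assms(2,3) by simp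
  then show ?thesis using hom inj surj by (auto simp: iso_def bij_betw_def)
qed

lemma hom_sub_iso:
  fixes G (structure)
  assumes "group G" "finite (carrier G)" "H \<subseteq> carrier G"
    and "\<phi> \<in> iso G (G\<lparr>carrier := H\<rparr>)"
  shows "\<phi> \<in> iso G G"
proof -
  have b: "bij_betw \<phi> (carrier G) H" using assms(4) by (simp add: iso_def)
  then have "card H = card (carrier G)" using bij_betw_same_card[OF b] by simp
  then have "H = carrier G" using assms(2,3) card_subset_eq by metis
  have "G\<lparr>carrier := H\<rparr> = G" using \<open>H = carrier G\<close> by simp
  then show ?thesis using assms(4) by simp
qed

theorem lemma2p3:
  fixes G :: "('a, 'b) monoid_scheme" and l :: nat
  assumes "group G"
    and "finite (carrier G)"
    and "tuple_regular G l"
    and "\<exists>g. (\<forall>i<l. g i \<in> carrier G) \<and> generate G (g ` {..<l}) = carrier G"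
  shows "\<forall>x\<in>carrier G. \<forall>y\<in>carrier G. group.ord G x = group.ord G y \<longrightarrow>
           (\<exists>\<phi>\<in>iso G G. \<phi> x = y)"
proof (intro ballI impI)
  interpret group G by fact
  fix x y assume x: "x \<in> carrier G" and y: "y \<in> carrier G" and o: "ord x = ord y"
  obtain g where g: "\<forall>i<l. g i \<in> carrier G" and gen: "generate G (g ` {..<l}) = carrier G"
    using assms(4) by blast
  show "\<exists>\<phi>\<in>iso G G. \<phi> x = y"
  proof (cases "l = 0")
    case True
    then have "carrier G = {\<one>\<^bsub>G\<^esub>}" using gen generate_empty by simp
    then have "x = y" using x y by simp
    then show ?thesis using id_iso[of G] by (metis id_apply)
  next
    case False
    define T where "T k = (\<lambda>i. if i < k then g i else x)" for k
    have Timg: "T k ` {..<l} = g ` {..<k} \<union> {x}" if "k < l" for k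
    proof
      show "T k ` {..<l} \<subseteq> g ` {..<k} \<union> {x}" by (auto simp: T_def)
      show "g ` {..<k} \<union> {x} \<subseteq> T k ` {..<l}"
      proof
        fix a assume "a \<in> g ` {..<k} \<union> {x}"
        then consider i where "i < k" "a = g i" | "a = x" by auto
        then show "a \<in> T k ` {..<l}"
        proof cases
          case (1 i)
          then show ?thesis using that by (intro image_eqI[of _ _ i]) (auto simp: T_def)
        next
          case 2
          then show ?thesis using that by (intro image_eqI[of _ _ k]) (auto simp: T_def)
        qed
      qed
    qed
    have Tc: "\<forall>i<l. T k i \<in> carrier G" for k using g x by (simp add: T_def)
    have reg: "\<And>a b. \<forall>i<l. a i \<in> carrier G \<Longrightarrow> \<forall>i<l. b i \<in> carrier G \<Longrightarrow> tuple_iso G l a b \<Longrightarrow>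
        \<exists>\<Psi>. bij_betw \<Psi> (carrier G) (carrier G) \<and>
             (\<forall>z\<in>carrier G. tuple_iso G (Suc l) (a(l := z)) (b(l := \<Psi> z)))"
      using assms(3) unfolding tuple_regular_def by blast
    have P: "k < l \<Longrightarrow> \<exists>S. (\<forall>i<l. S i \<in> carrier G) \<and> (\<forall>i. k \<le> i \<longrightarrow> i < l \<longrightarrow> S i = y)
              \<and> tuple_iso G l (T k) S" for k
    proof (induction k)
      case 0
      have e1: "T 0 ` {..<l} = {x}" using False by (auto simp: T_def)
      have e2: "(\<lambda>i. y) ` {..<l} = {y}" using False by auto
      obtain \<phi> where ph: "\<phi> \<in> iso (G\<lparr>carrier := generate G {x}\<rparr>) (G\<lparr>carrier := generate G {y}\<rparr>)" "\<phi> x = y"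
        using cyc_iso[OF assms(1) x y o] by blast
      have "\<forall>i<l. \<phi> (T 0 i) = (\<lambda>i. y) i" using ph(2) by (simp add: T_def)
      then have "tuple_iso G l (T 0) (\<lambda>i. y)" unfolding tuple_iso_def e1 e2
        by (intro exI[of _ \<phi>] conjI ph(1))
      then show ?case using y by (intro exI[of _ "\<lambda>i. y"]) simp
    next
      case (Suc k)
      then obtain S where S: "\<forall>i<l. S i \<in> carrier G" "\<forall>i. k \<le> i \<longrightarrow> i < l \<longrightarrow> S i = y"
        "tuple_iso G l (T k) S" by auto
      obtain \<Psi> where bij: "bij_betw \<Psi> (carrier G) (carrier G)"
        and ext: "\<forall>z\<in>carrier G. tuple_iso G (Suc l) ((T k)(l := z)) (S(l := \<Psi> z))"
        using reg[OF Tc S(1) S(3)] by blast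
      have gk: "g k \<in> carrier G" using g Suc by simp
      define w where "w = \<Psi> (g k)"
      have w: "w \<in> carrier G" using bij gk unfolding w_def bij_betw_def by auto
      have t: "tuple_iso G (Suc l) ((T k)(l := g k)) (S(l := w))" using ext gk w_def by blast
      have lS: "{..<Suc l} = insert l {..<l}" by auto
      have A: "(T k)(l := g k) ` {..<Suc l} = T (Suc k) ` {..<l}"
      proof -
        have "(T k)(l := g k) ` {..<Suc l} = insert (g k) (T k ` {..<l})" unfolding lS by auto
        also have "T k ` {..<l} = g ` {..<k} \<union> {x}"
          using Suc.prems Timg by simp
        also have "T (Suc k) ` {..<l} = g ` {..<Suc k} \<union> {x}"
          using Suc.prems Timg by simp
        ultimately show ?thesis by (auto simp: lessThan_Suc)
      qed
      have B: "(S(l := w)) ` {..<Suc l} = (S(k := w)) ` {..<l}"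
      proof -
        have "(S(l := w)) ` {..<Suc l} = insert w (S ` {..<l})" unfolding lS by auto
        also have "S ` {..<l} = insert y (S ` ({..<l} - {k}))"
        proof -
          have "S ` {..<l} = insert (S k) (S ` ({..<l} - {k}))" using Suc.prems by auto
          moreover have "S k = y" "S (Suc k) = y" using S(2) Suc.prems by auto
          moreover have "Suc k \<in> {..<l} - {k}" using Suc.prems by auto
          ultimately show ?thesis by auto
        qed
        also have "(S(k := w)) ` {..<l} = insert w (S ` ({..<l} - {k}))" using Suc.prems by auto
        moreover have "y \<in> S ` ({..<l} - {k})" using S(2) Suc.prems
          by (intro image_eqI[of _ _ "Suc k"]) auto
        ultimately show ?thesis by auto
      qed
      obtain \<phi> where phi: "\<phi> \<in> iso (G\<lparr>carrier := generate G (T (Suc k) ` {..<l})\<rparr>)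
                   (G\<lparr>carrier := generate G ((S(k := w)) ` {..<l})\<rparr>)"
          and pv: "\<forall>i<Suc l. \<phi> (((T k)(l := g k)) i) = (S(l := w)) i"
        using t unfolding tuple_iso_def A B by blast
      have "\<forall>i<l. \<phi> (T (Suc k) i) = (S(k := w)) i"
      proof (intro allI impI)
        fix i assume i: "i < l"
        show "\<phi> (T (Suc k) i) = (S(k := w)) i"
        proof (cases "i = k")
          case True
          then show ?thesis using pv[rule_format, of l] by (simp add: T_def)
        next
          case False
          then have "T (Suc k) i = T k i" by (simp add: T_def)
          then show ?thesis using pv[rule_format, of i] i False by simp
        qed
      qed
      then have "tuple_iso G l (T (Suc k)) (S(k := w))" unfolding tuple_iso_def by (intro exI[of _ \<phi>] conjI phi)
      moreover have "\<forall>i<l. (S(k := w)) i \<in> carrier G" using S(1) w by simp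
      moreover have "\<forall>i. Suc k \<le> i \<longrightarrow> i < l \<longrightarrow> (S(k := w)) i = y" using S(2) by simp
      ultimately show ?case by (intro exI[of _ "S(k := w)"] conjI) (simp_all only:)
    qed
    define k where "k = l - 1"
    have kl: "k < l" "Suc k = l" using False by (auto simp: k_def)
    obtain S where S: "\<forall>i<l. S i \<in> carrier G" "\<forall>i. k \<le> i \<longrightarrow> i < l \<longrightarrow> S i = y"
        "tuple_iso G l (T k) S" using P[OF kl(1)] by auto
    obtain \<Psi> where bij: "bij_betw \<Psi> (carrier G) (carrier G)"
      and ext: "\<forall>z\<in>carrier G. tuple_iso G (Suc l) ((T k)(l := z)) (S(l := \<Psi> z))"
      using reg[OF Tc S(1) S(3)] by blast
    have gk: "g k \<in> carrier G" using g kl by simp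
    obtain \<phi> where phi: "\<phi> \<in> iso (G\<lparr>carrier := generate G ((T k)(l := g k) ` {..<Suc l})\<rparr>)
                   (G\<lparr>carrier := generate G ((S(l := \<Psi> (g k))) ` {..<Suc l})\<rparr>)"
        and pv: "\<forall>i<Suc l. \<phi> (((T k)(l := g k)) i) = (S(l := \<Psi> (g k))) i"
      using ext gk unfolding tuple_iso_def by blast
    have sub1: "g ` {..<l} \<subseteq> (T k)(l := g k) ` {..<Suc l}"
    proof
      fix a assume "a \<in> g ` {..<l}"
      then obtain i where i: "i < l" "a = g i" by auto
      show "a \<in> (T k)(l := g k) ` {..<Suc l}"
      proof (cases "i = k")
        case True
        then show ?thesis using i by (auto intro!: image_eqI[of _ _ l])
      next
        case False
        then have "i < k" using i kl by auto
        then show ?thesis using i by (auto simp: T_def intro!: image_eqI[of _ _ i])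
      qed
    qed
    have sub2: "(T k)(l := g k) ` {..<Suc l} \<subseteq> carrier G" using Tc gk by (auto simp: less_Suc_eq)
    have "generate G ((T k)(l := g k) ` {..<Suc l}) = carrier G"
      using mono_generate[OF sub1] gen generate_incl[OF sub2] by auto
    then have phi': "\<phi> \<in> iso G (G\<lparr>carrier := generate G ((S(l := \<Psi> (g k))) ` {..<Suc l})\<rparr>)"
      using phi by simp
    have sub3: "(S(l := \<Psi> (g k))) ` {..<Suc l} \<subseteq> carrier G"
      using S(1) bij gk by (auto simp: less_Suc_eq bij_betw_def)
    have "\<phi> \<in> iso G G" using hom_sub_iso[OF assms(1,2) generate_incl[OF sub3] phi'] .
    moreover have "\<phi> x = y" using pv[rule_format, of k] kl S(2) by (auto simp: T_def)
    ultimately show ?thesis by blast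
  qed
qed

end
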